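(* Under the regularity condition (R-AD), $\sup_{1\le i\le m}\|\bar B_i-\tilde B_i\|_2=O_P\{\sqrt{Km\log m/n}\}$ as $n\to\infty$.
   Context: There are $m$ studies; study $i$ contains $n_i$ individuals with covariates $X_{i1},\dots,X_{in_i}\in\mathcal{X}\subseteq\mathbb{R}^p$ drawn i.i.d. from the conditional distribution (given study $i$) of a study population measure $\mathbb{P}$; $n=\sum_in_i$. $B=(B_1,\dots,B_K)^\top$ are basis functions with $B_1\equiv1$; $\bar B_i=n_i^{-1}\sum_jB(X_{ij})$ and $\tilde B_i=E_{\mathbb{P}}\{B(X)\mid G=i\}$. A target sample of size $n^*$ is also drawn; $\mathbb{Q}$ is the measure of the combined population. Further objects in (R-AD): study estimates $\hat\tau_i$ of $\tau_i=E_{\mathbb{P}}\{Y(1)-Y(0)\mid G=i\}$, scaling factors $c_i>0$, tolerances $\delta$, a convex twice-differentiable $\psi$ with $\psi'$ invertible, $h(x)=\psi(-x)$, $\rho(v)=-v(h')^{-1}(v)+h\{(h')^{-1}(v)\}$, and vectors $\tilde\lambda_3,\tilde\lambda_4\in\mathbb{R}^K$ (model coefficient vectors). (R-AD): (a) constants $C_0>0$, $C_1<C_2<0$ with $C_1\le m\rho''(v)\le C_2$ for all $v$ in a neighborhood of $\tilde B_i^\top\tilde\lambda_3/c_i$ ($i=1,\dots,m$), and $|m\rho'(v)|\le C_0$ for all $v=B(x)^\top\lambda$, $x\in\mathcal{X}$, $\lambda$; (b) $\sup_x\|B(x)\|_2\le CK^{1/2}$, $\|E_{\mathbb{Q}}\{B(X)B(X)^\top\}\|_F\le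 C$, $\|E_{\mathbb{Q}}\{\bar B_i\bar B_i^\top\}\|_F\le C$, and $\{B(x):x\in\mathcal{X}\}$ is convex; (c) $K=O\{(n/m)^{a_1}\}$, $K=O(m^{a_2})$ with $0<a_1<1/4$, $0<a_2<1$; (d) smallest eigenvalue of $E_{\mathbb{Q}}\{B(X)B(X)^\top\}$ exceeds a constant $C>0$; (e) $\|\delta\|_2=O_P\{\sqrt{K^3m\log m/n}\}$; (f) $n^*/n$ and $m(\inf_in_i)/n$ converge to finite positive constants, $m=O(n^a)$ with $0<a<1$; (g) $\sqrt{n_i}(\hat\tau_i-\tau_i)$ sub-Gaussian with variance proxy bounded by $C$; (h) $c_i\in[c_{\mathrm{lo}},c_{\mathrm{hi}}]$ with $0<c_{\mathrm{lo}}\le c_{\mathrm{hi}}$; (i) $\|\tilde\lambda_3\|_2,\|\tilde\lambda_4\|_2\le CK^{1/2}$. *)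

theory Defs
  imports "HOL-Probability.Probability" "HOL-Library.Landau_Symbols"
begin

definition vnorm :: "nat \<Rightarrow> (nat \<Rightarrow> real) \<Rightarrow> real" where
  "vnorm K v = sqrt (\<Sum>k<K. (v k)\<^sup>2)"

definition Bbar :: "('x \<Rightarrow> nat \<Rightarrow> real) \<Rightarrow> nat \<Rightarrow> (nat \<Rightarrow> 'w \<Rightarrow> 'x) \<Rightarrow> 'w \<Rightarrow> nat \<Rightarrow> real" where
  "Bbar B ni Xi \<omega> k = (\<Sum>j<ni. B (Xi j \<omega>) k) / real ni"

text \<open>Study-level population mean Btilde_i = E{B(X) | G = i}; since the X_ij are drawn
  from the conditional distribution given study i, this is E[B(X_i1)].\<close>
definition Btilde :: "'w measure \<Rightarrow> ('x \<Rightarrow> nat \<Rightarrow> real) \<Rightarrow> ('w \<Rightarrow> 'x) \<Rightarrow> nat \<Rightarrow> real" where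
  "Btilde \<Omega> B Xi1 k = (\<integral>\<omega>. B (Xi1 \<omega>) k \<partial>\<Omega>)"

definition bigO_P :: "(nat \<Rightarrow> 'w measure) \<Rightarrow> (nat \<Rightarrow> 'w \<Rightarrow> real) \<Rightarrow> (nat \<Rightarrow> real) \<Rightarrow> bool" where
  "bigO_P \<Omega> T r \<longleftrightarrow> (\<forall>\<epsilon>>0. \<exists>M. \<exists>N. \<forall>\<nu>\<ge>N.
      measure (\<Omega> \<nu>) {\<omega> \<in> space (\<Omega> \<nu>). \<bar>T \<nu> \<omega>\<bar> > M * r \<nu>} < \<epsilon>)"

end

theory Submission
  imports Defs
begin


lemma hoeff:
  fixes M :: "'w measure" and Z :: "nat \<Rightarrow> 'w \<Rightarrow> 'x::topological_space" and f :: "'x \<Rightarrow> real"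
  assumes P: "prob_space M"
    and ind: "prob_space.indep_vars M (\<lambda>_. borel) Z {..<N}"
    and N: "N \<ge> 1"
    and fm: "f \<in> borel_measurable borel"
    and Zm: "\<And>j. j < N \<Longrightarrow> Z j \<in> borel_measurable M"
    and dist: "\<And>j. j < N \<Longrightarrow> distr M borel (Z j) = distr M borel (Z 0)"
    and bnd: "\<And>j \<omega>. j < N \<Longrightarrow> \<omega> \<in> space M \<Longrightarrow> \<bar>f (Z j \<omega>)\<bar> \<le> D"
    and D: "D > 0" and e: "\<epsilon> \<ge> 0"
  shows "measure M {\<omega>\<in>space M. \<bar>(\<Sum>j<N. f (Z j \<omega>)) / real N - (\<integral>\<omega>. f (Z 0 \<omega>) \<partial>M)\<bar> \<ge> \<epsilon>}
     \<le> 2 * exp (-2 * real N * \<epsilon>\<^sup>2 / (D - (-D))\<^sup>2)"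
proof -
  interpret prob_space M by (rule P)
  have Z0: "Z 0 \<in> borel_measurable M" using Zm N by auto
  have ind2: "indep_vars (\<lambda>_. borel) (\<lambda>j \<omega>. f (Z j \<omega>)) {..<N}"
    by (rule indep_vars_compose2[OF ind]) (use fm in auto)
  interpret H: Hoeffding_ineq_iid M "{..<N}" "\<lambda>j \<omega>. f (Z j \<omega>)" "\<lambda>\<omega>. f (Z 0 \<omega>)" "-D" D
    "expectation (\<lambda>\<omega>. f (Z 0 \<omega>))"
  proof unfold_locales
    show "indep_vars (\<lambda>_. borel) (\<lambda>j \<omega>. f (Z j \<omega>)) {..<N}" by (rule ind2)
    show "random_variable borel (\<lambda>\<omega>. f (Z 0 \<omega>))" using Z0 fm by measurable
    fix i assume i: "i \<in> {..<N}"
    have "distr M borel (\<lambda>\<omega>. f (Z i \<omega>)) = distr (distr M borel (Z i)) borel f"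
      using Zm[of i] i fm by (subst distr_distr) (auto simp: comp_def)
    also have "\<dots> = distr (distr M borel (Z 0)) borel f" using dist[of i] i by simp
    also have "\<dots> = distr M borel (\<lambda>\<omega>. f (Z 0 \<omega>))"
      using Z0 fm by (subst distr_distr) (auto simp: comp_def)
    finally show "distr M borel (\<lambda>\<omega>. f (Z i \<omega>)) = distr M borel (\<lambda>\<omega>. f (Z 0 \<omega>))" .
  next
    show "AE x in M. f (Z 0 x) \<in> {- D..D}"
    proof (intro AE_I2)
      fix x assume "x \<in> space M"
      then have "\<bar>f (Z 0 x)\<bar> \<le> D" using bnd[of 0 x] N by simp
      then show "f (Z 0 x) \<in> {- D..D}" by (simp add: abs_le_iff)
    qed
  qed simp
  have ab: "-D < D" using D by simp
  have ne: "{..<N} \<noteq> {}" using N by (metis One_nat_def lessThan_empty_iff not_one_le_zero)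
  show ?thesis
    using H.Hoeffding_ineq_abs_ge'[OF e ab ne] by (simp only: card_lessThan)
qed



lemma vnorm_coord: "k < K \<Longrightarrow> \<bar>v k\<bar> \<le> vnorm K v"
proof -
  assume k: "k < K"
  have "(v k)\<^sup>2 \<le> (\<Sum>j<K. (v j)\<^sup>2)" using k by (intro member_le_sum) auto
  then have "sqrt ((v k)\<^sup>2) \<le> vnorm K v" unfolding vnorm_def by (rule real_sqrt_le_mono)
  then show ?thesis by simp
qed

lemma vnorm_le: assumes "\<And>k. k < K \<Longrightarrow> \<bar>v k\<bar> \<le> t" "t \<ge> 0"
  shows "vnorm K v \<le> sqrt (real K) * t"
proof -
  have "(\<Sum>j<K. (v j)\<^sup>2) \<le> (\<Sum>j<K. t\<^sup>2)"
    using assms by (intro sum_mono) (metis abs_ge_zero lessThan_iff power2_abs power_mono)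
  also have "\<dots> = real K * t\<^sup>2" by simp
  finally have "vnorm K v \<le> sqrt (real K * t\<^sup>2)" unfolding vnorm_def by (rule real_sqrt_le_mono)
  also have "\<dots> = sqrt (real K) * t" using assms(2) by (simp add: real_sqrt_mult)
  finally show ?thesis .
qed

lemma exp_ln2: "(m::real) > 0 \<Longrightarrow> exp (-2 * ln m) = 1 / m\<^sup>2"
proof -
  assume m: "m > 0"
  have "exp (2 * ln m) = exp (ln m + ln m)" by (simp only: mult_2)
  also have "\<dots> = exp (ln m) * exp (ln m)" by (rule exp_add)
  also have "\<dots> = m\<^sup>2" using m by (simp add: power2_eq_square)
  finally show ?thesis by (simp add: exp_minus inverse_eq_divide)
qed

lemma arith:
  fixes N m n K Kb C M \<kappa>2 L D t :: real
  assumes "N * m / n \<ge> \<kappa>2 / 2" "\<kappa>2 > 0" "C > 0" "K > 0" "K \<le> Kb" "L \<ge> 0" "n > 0" "m > 0"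
    "M\<^sup>2 = 8 * C\<^sup>2 * Kb / \<kappa>2" "D = C * sqrt K" "t = M * sqrt (K * m * L / n) / sqrt K"
  shows "-2 * N * t\<^sup>2 / (D - -D)\<^sup>2 \<le> -2 * L"
proof -
  have t2: "t\<^sup>2 = M\<^sup>2 * m * L / n" using assms
    by (simp add: power_divide power_mult_distrib)
  have D2: "(D - -D)\<^sup>2 = 4 * C\<^sup>2 * K" using assms by (simp add: power_mult_distrib power2_eq_square)
  have "2 * N * t\<^sup>2 / (D - -D)\<^sup>2 = (N * m / n) * M\<^sup>2 * L / (2 * C\<^sup>2 * K)"
    unfolding t2 D2 using assms by (simp add: field_simps power2_eq_square)
  also have "\<dots> \<ge> (\<kappa>2/2) * M\<^sup>2 * L / (2 * C\<^sup>2 * K)"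
    using assms by (intro divide_right_mono mult_right_mono) auto
  also have "(\<kappa>2/2) * M\<^sup>2 * L / (2 * C\<^sup>2 * K) = 2 * L * (Kb / K)"
    using assms by (simp add: field_simps power2_eq_square)
  also have "\<dots> \<ge> 2 * L * 1" using assms by (intro mult_left_mono) auto
  finally show ?thesis by simp
qed



lemma delta2: "k < (K::nat) \<Longrightarrow> (\<Sum>j<K. \<Sum>l<K. (if j = k \<and> l = k then (q::real) else 0)) = q"
proof -
  assume k: "k < K"
  have "(\<Sum>j<K. \<Sum>l<K. (if j = k \<and> l = k then (q::real) else 0)) = (\<Sum>j<K. if j = k then q else 0)"
  proof (rule sum.cong[OF refl])
    fix j assume "j \<in> {..<K}"
    show "(\<Sum>l<K. (if j = k \<and> l = k then (q::real) else 0)) = (if j = k then q else 0)"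
      using k by (cases "j = k") simp_all
  qed
  also have "\<dots> = q" using k by simp
  finally show ?thesis .
qed

theorem lemmaS7:
  fixes \<Omega> :: "nat \<Rightarrow> 'w measure"
    and Q :: "nat \<Rightarrow> (real ^ 'p) measure"
    and \<X> :: "(real ^ 'p) set"
    and m K n nstar :: "nat \<Rightarrow> nat"
    and ns :: "nat \<Rightarrow> nat \<Rightarrow> nat"
    and X :: "nat \<Rightarrow> nat \<Rightarrow> nat \<Rightarrow> 'w \<Rightarrow> real ^ 'p"
    and B :: "nat \<Rightarrow> real ^ 'p \<Rightarrow> nat \<Rightarrow> real"
    and C Cmin a a1 a2 \<kappa>1 \<kappa>2 :: real
  assumes prob: "\<And>\<nu>. prob_space (\<Omega> \<nu>)"
    and probQ: "\<And>\<nu>. prob_space (Q \<nu>)"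
    and m_pos: "\<And>\<nu>. m \<nu> \<ge> 1"
    and ns_pos: "\<And>\<nu> i. i < m \<nu> \<Longrightarrow> ns \<nu> i \<ge> 1"
    and n_def: "\<And>\<nu>. n \<nu> = (\<Sum>i<m \<nu>. ns \<nu> i)"
    and n_lim: "filterlim n at_top sequentially"
    and m_lim: "filterlim m at_top sequentially"
    and K_pos: "\<And>\<nu>. K \<nu> \<ge> 1"
    \<comment> \<open>sampling: X_{i1},...,X_{in_i} i.i.d. within study i, valued in the covariate space\<close>
    and X_meas: "\<And>\<nu> i j. i < m \<nu> \<Longrightarrow> j < ns \<nu> i \<Longrightarrow> X \<nu> i j \<in> borel_measurable (\<Omega> \<nu>)"
    and X_indep: "\<And>\<nu> i. i < m \<nu> \<Longrightarrow>
        prob_space.indep_vars (\<Omega> \<nu>) (\<lambda>_. borel) (X \<nu> i) {..<ns \<nu> i}"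
    and X_ident: "\<And>\<nu> i j. i < m \<nu> \<Longrightarrow> j < ns \<nu> i \<Longrightarrow>
        distr (\<Omega> \<nu>) borel (X \<nu> i j) = distr (\<Omega> \<nu>) borel (X \<nu> i 0)"
    and X_range: "\<And>\<nu> i j \<omega>. i < m \<nu> \<Longrightarrow> j < ns \<nu> i \<Longrightarrow> \<omega> \<in> space (\<Omega> \<nu>) \<Longrightarrow>
        X \<nu> i j \<omega> \<in> \<X>"
    \<comment> \<open>basis functions, B_1 = 1\<close>
    and B_meas: "\<And>\<nu> k. (\<lambda>x. B \<nu> x k) \<in> borel_measurable borel"
    and B_one: "\<And>\<nu> x. B \<nu> x 0 = 1"
    \<comment> \<open>(b)\<close>
    and C_pos: "C > 0"
    and b_sup: "\<And>\<nu> x. x \<in> \<X> \<Longrightarrow> vnorm (K \<nu>) (B \<nu> x) \<le> C * sqrt (real (K \<nu>))"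
    and b_Q: "\<And>\<nu>. sqrt (\<Sum>k<K \<nu>. \<Sum>l<K \<nu>. (\<integral>x. B \<nu> x k * B \<nu> x l \<partial>Q \<nu>)\<^sup>2) \<le> C"
    and b_Bbar: "\<And>\<nu> i. i < m \<nu> \<Longrightarrow>
        sqrt (\<Sum>k<K \<nu>. \<Sum>l<K \<nu>. (\<integral>\<omega>. Bbar (B \<nu>) (ns \<nu> i) (X \<nu> i) \<omega> k
              * Bbar (B \<nu>) (ns \<nu> i) (X \<nu> i) \<omega> l \<partial>\<Omega> \<nu>)\<^sup>2) \<le> C"
    and b_convex: "\<And>\<nu> x y t. x \<in> \<X> \<Longrightarrow> y \<in> \<X> \<Longrightarrow> 0 \<le> t \<Longrightarrow> t \<le> 1 \<Longrightarrow>
        \<exists>z\<in>\<X>. \<forall>k<K \<nu>. B \<nu> z k = t * B \<nu> x k + (1 - t) * B \<nu> y k"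
    \<comment> \<open>(c)\<close>
    and a1: "0 < a1" "a1 < 1/4" and a2: "0 < a2" "a2 < 1"
    and c1: "(\<lambda>\<nu>. real (K \<nu>)) \<in> O(\<lambda>\<nu>. (real (n \<nu>) / real (m \<nu>)) powr a1)"
    and c2: "(\<lambda>\<nu>. real (K \<nu>)) \<in> O(\<lambda>\<nu>. real (m \<nu>) powr a2)"
    \<comment> \<open>(d): smallest eigenvalue of E_Q{B B^T} exceeds Cmin > 0\<close>
    and Cmin_pos: "Cmin > 0"
    and d: "\<And>\<nu> v. (\<Sum>k<K \<nu>. (v k)\<^sup>2) = 1 \<Longrightarrow>
        Cmin < (\<Sum>k<K \<nu>. \<Sum>l<K \<nu>. v k * v l * (\<integral>x. B \<nu> x k * B \<nu> x l \<partial>Q \<nu>))"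
    \<comment> \<open>(f)\<close>
    and f1: "\<kappa>1 > 0" "(\<lambda>\<nu>. real (nstar \<nu>) / real (n \<nu>)) \<longlonglongrightarrow> \<kappa>1"
    and f2: "\<kappa>2 > 0" "(\<lambda>\<nu>. real (m \<nu>) * real (Min (ns \<nu> ` {..<m \<nu>})) / real (n \<nu>)) \<longlonglongrightarrow> \<kappa>2"
    and f3: "0 < a" "a < 1" "(\<lambda>\<nu>. real (m \<nu>)) \<in> O(\<lambda>\<nu>. real (n \<nu>) powr a)"
  shows "bigO_P \<Omega>
           (\<lambda>\<nu> \<omega>. Max ((\<lambda>i. vnorm (K \<nu>) (\<lambda>k. Bbar (B \<nu>) (ns \<nu> i) (X \<nu> i) \<omega> k
                                   - Btilde (\<Omega> \<nu>) (B \<nu>) (X \<nu> i 0) k)) ` {..<m \<nu>}))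
           (\<lambda>\<nu>. sqrt (real (K \<nu>) * real (m \<nu>) * ln (real (m \<nu>)) / real (n \<nu>)))"
proof -
  define Kb where "Kb = C\<^sup>2 / Cmin\<^sup>2"
  have Kbd: "real (K \<nu>) \<le> Kb" for \<nu>
  proof -
    define q where "q k l = (\<integral>x. B \<nu> x k * B \<nu> x l \<partial>Q \<nu>)" for k l
    have qkk: "Cmin < q k k" if k: "k < K \<nu>" for k
    proof -
      define v where "v j = (if j = k then 1 else 0::real)" for j
      have vv: "(\<lambda>j. (v j)\<^sup>2) = v" by (auto simp: v_def)
      have "(\<Sum>j<K \<nu>. (v j)\<^sup>2) = 1" unfolding vv using k by (simp add: v_def)
      then have "Cmin < (\<Sum>j<K \<nu>. \<Sum>l<K \<nu>. v j * v l * q j l)" unfolding q_def by (rule d)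
      also have "\<dots> = (\<Sum>j<K \<nu>. \<Sum>l<K \<nu>. (if j = k \<and> l = k then q k k else 0))"
        by (intro sum.cong refl) (auto simp: v_def)
      also have "\<dots> = q k k" using k by (rule delta2)
      finally show ?thesis .
    qed
    have "real (K \<nu>) * Cmin\<^sup>2 = (\<Sum>k<K \<nu>. Cmin\<^sup>2)" by simp
    also have "\<dots> \<le> (\<Sum>k<K \<nu>. (q k k)\<^sup>2)"
      using qkk Cmin_pos by (intro sum_mono power_mono) (auto intro: less_imp_le)
    also have "\<dots> \<le> (\<Sum>k<K \<nu>. \<Sum>l<K \<nu>. (q k l)\<^sup>2)"
      by (intro sum_mono member_le_sum) auto
    also have "\<dots> \<le> C\<^sup>2"
    proof -
      have "sqrt (\<Sum>k<K \<nu>. \<Sum>l<K \<nu>. (q k l)\<^sup>2) \<le> C" using b_Q unfolding q_def by blast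
      moreover have S0: "0 \<le> (\<Sum>k<K \<nu>. \<Sum>l<K \<nu>. (q k l)\<^sup>2)" by (intro sum_nonneg) auto
      ultimately have "(sqrt (\<Sum>k<K \<nu>. \<Sum>l<K \<nu>. (q k l)\<^sup>2))\<^sup>2 \<le> C\<^sup>2"
        by (intro power_mono) auto
      with S0 show ?thesis by simp
    qed
    finally have "real (K \<nu>) * Cmin\<^sup>2 \<le> C\<^sup>2" .
    then show ?thesis unfolding Kb_def using Cmin_pos by (simp add: pos_le_divide_eq)
  qed
  have Kb_pos: "Kb > 0" unfolding Kb_def using C_pos Cmin_pos by simp
  show ?thesis unfolding bigO_P_def
  proof (intro allI impI)
    fix \<epsilon> :: real assume eps: "\<epsilon> > 0"
    define M where "M = sqrt (8 * C\<^sup>2 * Kb / \<kappa>2)"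
    have M2nn: "0 \<le> 8 * C\<^sup>2 * Kb / \<kappa>2" using Kb_pos f2(1)
      by (intro divide_nonneg_nonneg mult_nonneg_nonneg) auto
    have M2: "M\<^sup>2 = 8 * C\<^sup>2 * Kb / \<kappa>2" unfolding M_def using M2nn by simp
    have M_nn: "M \<ge> 0" unfolding M_def using M2nn by simp
    have ev1: "eventually (\<lambda>\<nu>. real (m \<nu>) * real (Min (ns \<nu> ` {..<m \<nu>})) / real (n \<nu>) > \<kappa>2 / 2) sequentially"
      using f2(2) f2(1) by (intro order_tendstoD(1)) auto
    have ev2: "eventually (\<lambda>\<nu>. real (m \<nu>) > 2 * Kb / \<epsilon>) sequentially"
    proof -
      have "filterlim (\<lambda>\<nu>. real (m \<nu>)) at_top sequentially"
        using m_lim by (rule filterlim_compose[OF filterlim_real_sequentially])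
      then show ?thesis by (simp add: filterlim_at_top_dense)
    qed
    from eventually_conj[OF ev1 ev2] obtain N0 where N0: "\<And>\<nu>. \<nu> \<ge> N0 \<Longrightarrow>
        real (m \<nu>) * real (Min (ns \<nu> ` {..<m \<nu>})) / real (n \<nu>) > \<kappa>2 / 2 \<and> real (m \<nu>) > 2 * Kb / \<epsilon>"
      unfolding eventually_sequentially by blast
    show "\<exists>M N. \<forall>\<nu>\<ge>N. measure (\<Omega> \<nu>) {\<omega> \<in> space (\<Omega> \<nu>). \<bar>Max ((\<lambda>i. vnorm (K \<nu>) (\<lambda>k. Bbar (B \<nu>) (ns \<nu> i) (X \<nu> i) \<omega> k
                                   - Btilde (\<Omega> \<nu>) (B \<nu>) (X \<nu> i 0) k)) ` {..<m \<nu>})\<bar> >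
           M * sqrt (real (K \<nu>) * real (m \<nu>) * ln (real (m \<nu>)) / real (n \<nu>))} < \<epsilon>"
    proof (intro exI[of _ M] exI[of _ N0] allI impI)
      fix \<nu> assume "N0 \<le> \<nu>"
      note N0 = N0[OF this]
      interpret P: prob_space "\<Omega> \<nu>" by (rule prob)
      define r where "r = sqrt (real (K \<nu>) * real (m \<nu>) * ln (real (m \<nu>)) / real (n \<nu>))"
      define t where "t = M * r / sqrt (real (K \<nu>))"
      define E where "E p = {\<omega> \<in> space (\<Omega> \<nu>). t \<le> \<bar>Bbar (B \<nu>) (ns \<nu> (fst p)) (X \<nu> (fst p)) \<omega> (snd p)
                               - Btilde (\<Omega> \<nu>) (B \<nu>) (X \<nu> (fst p) 0) (snd p)\<bar>}" for p
      define T where "T \<omega> = Max ((\<lambda>i. vnorm (K \<nu>) (\<lambda>k. Bbar (B \<nu>) (ns \<nu> i) (X \<nu> i) \<omega> k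
                                   - Btilde (\<Omega> \<nu>) (B \<nu>) (X \<nu> i 0) k)) ` {..<m \<nu>})" for \<omega>
      define I where "I = {..<m \<nu>} \<times> {..<K \<nu>}"
      have mpos: "real (m \<nu>) > 0" using m_pos[of \<nu>] by simp
      have Kpos: "real (K \<nu>) > 0" using K_pos[of \<nu>] by simp
      have npos: "real (n \<nu>) > 0"
      proof -
        have "ns \<nu> 0 \<le> n \<nu>" unfolding n_def using m_pos[of \<nu>] by (intro member_le_sum) auto
        then show ?thesis using ns_pos[of 0 \<nu>] m_pos[of \<nu>] by simp
      qed
      have lnm: "ln (real (m \<nu>)) \<ge> 0" using m_pos[of \<nu>] by simp
      have rarg: "0 \<le> real (K \<nu>) * real (m \<nu>) * ln (real (m \<nu>)) / real (n \<nu>)"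
        using lnm by (intro divide_nonneg_nonneg mult_nonneg_nonneg) auto
      have r_nn: "r \<ge> 0" unfolding r_def using rarg by simp
      have t_nn: "t \<ge> 0" unfolding t_def by (intro divide_nonneg_nonneg mult_nonneg_nonneg M_nn r_nn) simp
      have sub: "{\<omega> \<in> space (\<Omega> \<nu>). \<bar>T \<omega>\<bar> > M * r} \<subseteq> (\<Union>p\<in>I. E p)"
      proof
        fix \<omega> assume w: "\<omega> \<in> {\<omega> \<in> space (\<Omega> \<nu>). \<bar>T \<omega>\<bar> > M * r}"
        have ne: "{..<m \<nu>} \<noteq> {}" proof -
          have "0 \<in> {..<m \<nu>}" using m_pos[of \<nu>] by simp
          then show ?thesis by blast
        qed
        have "\<bar>T \<omega>\<bar> = T \<omega>"
        proof -
          have "0 \<le> vnorm (K \<nu>) (\<lambda>k. Bbar (B \<nu>) (ns \<nu> 0) (X \<nu> 0) \<omega> k - Btilde (\<Omega> \<nu>) (B \<nu>) (X \<nu> 0 0) k)"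
            unfolding vnorm_def by (intro real_sqrt_ge_zero sum_nonneg) simp
          also have "\<dots> \<le> T \<omega>" unfolding T_def using m_pos[of \<nu>] by (intro Max_ge) auto
          finally show ?thesis by simp
        qed
        with w have "M * r < T \<omega>" by simp
        then obtain i where i: "i < m \<nu>" and gi: "M * r < vnorm (K \<nu>) (\<lambda>k. Bbar (B \<nu>) (ns \<nu> i) (X \<nu> i) \<omega> k
                                   - Btilde (\<Omega> \<nu>) (B \<nu>) (X \<nu> i 0) k)"
          unfolding T_def using ne by (subst (asm) Max_gr_iff) auto
        have "\<exists>k<K \<nu>. t \<le> \<bar>Bbar (B \<nu>) (ns \<nu> i) (X \<nu> i) \<omega> k - Btilde (\<Omega> \<nu>) (B \<nu>) (X \<nu> i 0) k\<bar>"
        proof (rule ccontr)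
          assume "\<not> ?thesis"
          then have "vnorm (K \<nu>) (\<lambda>k. Bbar (B \<nu>) (ns \<nu> i) (X \<nu> i) \<omega> k - Btilde (\<Omega> \<nu>) (B \<nu>) (X \<nu> i 0) k)
               \<le> sqrt (real (K \<nu>)) * t"
            using t_nn by (intro vnorm_le) auto
          also have "\<dots> = M * r" unfolding t_def using Kpos by simp
          finally show False using gi by simp
        qed
        then obtain k where "k < K \<nu>" "t \<le> \<bar>Bbar (B \<nu>) (ns \<nu> i) (X \<nu> i) \<omega> k - Btilde (\<Omega> \<nu>) (B \<nu>) (X \<nu> i 0) k\<bar>"
          by blast
        then show "\<omega> \<in> (\<Union>p\<in>I. E p)" using i w unfolding I_def E_def
          by (intro UN_I[of "(i, k)"]) auto
      qed
      have Bm: "(\<lambda>\<omega>. Bbar (B \<nu>) (ns \<nu> i) (X \<nu> i) \<omega> k) \<in> borel_measurable (\<Omega> \<nu>)" if "i < m \<nu>" for i k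
        unfolding Bbar_def using that
        by (intro borel_measurable_divide borel_measurable_sum measurable_compose[OF X_meas B_meas]
            borel_measurable_const) auto
      have Esets: "E p \<in> P.events" if "p \<in> I" for p
      proof -
        have [measurable]: "(\<lambda>\<omega>. Bbar (B \<nu>) (ns \<nu> (fst p)) (X \<nu> (fst p)) \<omega> (snd p)) \<in> borel_measurable (\<Omega> \<nu>)"
          using that Bm unfolding I_def by (auto simp: mem_Times_iff)
        show ?thesis unfolding E_def by measurable
      qed
      have Ebound: "P.prob (E p) \<le> 2 / (real (m \<nu>))\<^sup>2" if pI: "p \<in> I" for p
      proof -
        obtain i k where p: "p = (i, k)" and i: "i < m \<nu>" and k: "k < K \<nu>"
          using pI unfolding I_def by auto
        have ni: "ns \<nu> i \<ge> 1" using ns_pos i by simp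
        have bnd: "\<bar>B \<nu> (X \<nu> i j \<omega>) k\<bar> \<le> C * sqrt (real (K \<nu>))" if "j < ns \<nu> i" "\<omega> \<in> space (\<Omega> \<nu>)" for j \<omega>
          using vnorm_coord[OF k, of "B \<nu> (X \<nu> i j \<omega>)"] b_sup[OF X_range[OF i that], of \<nu>] by linarith
        have H: "P.prob (E p) \<le> 2 * exp (-2 * real (ns \<nu> i) * t\<^sup>2 / (C * sqrt (real (K \<nu>)) - - (C * sqrt (real (K \<nu>))))\<^sup>2)"
          unfolding E_def p fst_conv snd_conv Bbar_def Btilde_def
          by (rule hoeff[OF prob X_indep[OF i] ni B_meas X_meas[OF i] X_ident[OF i] bnd _ t_nn])
             (use C_pos Kpos in auto)
        have Min_le: "Min (ns \<nu> ` {..<m \<nu>}) \<le> ns \<nu> i" using i by (intro Min_le) auto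
        have "real (ns \<nu> i) * real (m \<nu>) / real (n \<nu>) \<ge> \<kappa>2 / 2"
        proof -
          have "real (m \<nu>) * real (Min (ns \<nu> ` {..<m \<nu>})) / real (n \<nu>) \<le> real (ns \<nu> i) * real (m \<nu>) / real (n \<nu>)"
            using Min_le npos by (subst mult.commute[of "real (ns \<nu> i)"], intro divide_right_mono mult_left_mono) auto
          then show ?thesis using N0 by linarith
        qed
        moreover have tdef: "t = M * sqrt (real (K \<nu>) * real (m \<nu>) * ln (real (m \<nu>)) / real (n \<nu>)) / sqrt (real (K \<nu>))"
          unfolding t_def r_def by simp
        ultimately have "-2 * real (ns \<nu> i) * t\<^sup>2 / (C * sqrt (real (K \<nu>)) - - (C * sqrt (real (K \<nu>))))\<^sup>2
                     \<le> -2 * ln (real (m \<nu>))"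
          by (intro arith[OF _ f2(1) C_pos Kpos Kbd lnm npos mpos M2 refl])
        then have "exp (-2 * real (ns \<nu> i) * t\<^sup>2 / (C * sqrt (real (K \<nu>)) - - (C * sqrt (real (K \<nu>))))\<^sup>2)
              \<le> exp (-2 * ln (real (m \<nu>)))" by simp
        then have "exp (-2 * real (ns \<nu> i) * t\<^sup>2 / (C * sqrt (real (K \<nu>)) - - (C * sqrt (real (K \<nu>))))\<^sup>2)
              \<le> 1 / (real (m \<nu>))\<^sup>2" by (simp only: exp_ln2[OF mpos])
        with H show ?thesis by simp
      qed
      have "P.prob {\<omega> \<in> space (\<Omega> \<nu>). \<bar>T \<omega>\<bar> > M * r} \<le> P.prob (\<Union>p\<in>I. E p)"
        using sub Esets by (intro P.finite_measure_mono) (auto simp: I_def)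
      also have "\<dots> \<le> (\<Sum>p\<in>I. P.prob (E p))"
        using Esets by (intro P.finite_measure_subadditive_finite) (auto simp: I_def)
      also have "\<dots> \<le> (\<Sum>p\<in>I. 2 / (real (m \<nu>))\<^sup>2)" using Ebound by (intro sum_mono) auto
      also have "\<dots> = real (m \<nu>) * real (K \<nu>) * (2 / (real (m \<nu>))\<^sup>2)" by (simp add: I_def card_cartesian_product)
      also have "\<dots> = 2 * real (K \<nu>) / real (m \<nu>)" using mpos by (simp add: power2_eq_square field_simps)
      also have "\<dots> \<le> 2 * Kb / real (m \<nu>)" using Kbd[of \<nu>] mpos by (intro divide_right_mono) auto
      also have "\<dots> < \<epsilon>" using N0 mpos eps by (simp add: field_simps)
      finally have fin: "P.prob {\<omega> \<in> space (\<Omega> \<nu>). \<bar>T \<omega>\<bar> > M * r} < \<epsilon>" .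
      show "measure (\<Omega> \<nu>) {\<omega> \<in> space (\<Omega> \<nu>). \<bar>Max ((\<lambda>i. vnorm (K \<nu>) (\<lambda>k. Bbar (B \<nu>) (ns \<nu> i) (X \<nu> i) \<omega> k
                                   - Btilde (\<Omega> \<nu>) (B \<nu>) (X \<nu> i 0) k)) ` {..<m \<nu>})\<bar> >
           M * sqrt (real (K \<nu>) * real (m \<nu>) * ln (real (m \<nu>)) / real (n \<nu>))} < \<epsilon>"
        using fin unfolding T_def r_def .
    qed
  qed
qed

end
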